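(* Let $G$ be a graph with $n$ vertices, and let $A$ be the set of paths of length $2$ in $G$ that are not contained in any cycle of length at least $4$ in $G$. Then \[\sum_{xyz\in A}\frac1{\deg y}<\frac{3n}2,\] where the sum is over unlabeled paths (each path $xyz=zyx$ counted once) and $\deg y$ is the degree in $G$ of the middle vertex $y$. *)

theory Defs
  imports Complex_Main
begin

definition simple_graph :: "'a set \<Rightarrow> ('a \<Rightarrow> 'a \<Rightarrow> bool) \<Rightarrow> bool" where
  "simple_graph V E \<longleftrightarrow> finite V \<and> (\<forall>x y. E x y \<longrightarrow> x \<in> V \<and> y \<in> V)
     \<and> (\<forall>x y. E x y \<longrightarrow> E y x) \<and> (\<forall>x. \<not> E x x)"

definition degree :: "'a set \<Rightarrow> ('a \<Rightarrow> 'a \<Rightarrow> bool) \<Rightarrow> 'a \<Rightarrow> nat" where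
  "degree V E y = card {w \<in> V. E y w}"

definition is_cycle :: "'a set \<Rightarrow> ('a \<Rightarrow> 'a \<Rightarrow> bool) \<Rightarrow> 'a list \<Rightarrow> bool" where
  "is_cycle V E vs \<longleftrightarrow> length vs \<ge> 3 \<and> distinct vs \<and> set vs \<subseteq> V
     \<and> (\<forall>i < length vs. E (vs ! i) (vs ! ((i + 1) mod length vs)))"

definition path_in_cycle :: "'a \<Rightarrow> 'a \<Rightarrow> 'a \<Rightarrow> 'a list \<Rightarrow> bool" where
  "path_in_cycle x y z vs \<longleftrightarrow> (\<exists>i < length vs. vs ! i = x
     \<and> vs ! ((i + 1) mod length vs) = y \<and> vs ! ((i + 2) mod length vs) = z)"

text \<open>Unlabelled paths of length 2, represented as (middle vertex, set of the two end vertices),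
which are not contained in any cycle of length at least 4.\<close>
definition bad_paths :: "'a set \<Rightarrow> ('a \<Rightarrow> 'a \<Rightarrow> bool) \<Rightarrow> ('a \<times> 'a set) set" where
  "bad_paths V E = {(y, {x, z}) | x y z. x \<noteq> z \<and> E x y \<and> E y z
     \<and> \<not> (\<exists>vs. is_cycle V E vs \<and> length vs \<ge> 4
            \<and> (path_in_cycle x y z vs \<or> path_in_cycle z y x vs))}"

end

theory Submission
  imports Defs
begin


definition rch :: "'a set \<Rightarrow> ('a \<Rightarrow> 'a \<Rightarrow> bool) \<Rightarrow> 'a \<Rightarrow> 'a \<Rightarrow> bool" where
  "rch S R a b \<longleftrightarrow> (\<lambda>u v. R u v \<and> u \<in> S \<and> v \<in> S)\<^sup>*\<^sup>* a b"

lemma rch_refl[simp]: "rch S R a a"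
  by (simp add: rch_def)

lemma rch_step: "R a b \<Longrightarrow> a \<in> S \<Longrightarrow> b \<in> S \<Longrightarrow> rch S R b c \<Longrightarrow> rch S R a c"
  unfolding rch_def by (rule converse_rtranclp_into_rtranclp) auto

lemma rch_snoc: "rch S R a b \<Longrightarrow> R b c \<Longrightarrow> b \<in> S \<Longrightarrow> c \<in> S \<Longrightarrow> rch S R a c"
  unfolding rch_def by (rule rtranclp.rtrancl_into_rtrancl) auto

lemma rch_trans: "rch S R a b \<Longrightarrow> rch S R b c \<Longrightarrow> rch S R a c"
  unfolding rch_def by (rule rtranclp_trans)

lemma rch_sym: assumes "\<And>u v. R u v \<Longrightarrow> R v u" "rch S R a b" shows "rch S R b a"
proof -
  have "(\<lambda>u v. R u v \<and> u \<in> S \<and> v \<in> S)\<^sup>*\<^sup>* a b" using assms(2) by (simp add: rch_def)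
  then show ?thesis
  proof (induction rule: rtranclp_induct)
    case base then show ?case by simp
  next
    case (step y z) then show ?case using assms(1) rch_step by metis
  qed
qed

lemma rch_mono: assumes "rch S R a b"
  and "\<And>u v. u \<in> S \<Longrightarrow> v \<in> S \<Longrightarrow> R u v \<Longrightarrow> u \<in> S' \<and> v \<in> S' \<and> R' u v"
  shows "rch S' R' a b"
proof -
  have "(\<lambda>u v. R u v \<and> u \<in> S \<and> v \<in> S)\<^sup>*\<^sup>* a b" using assms(1) by (simp add: rch_def)
  then show ?thesis
  proof (induction rule: rtranclp_induct)
    case base then show ?case by simp
  next
    case (step y z) then show ?case using assms(2) rch_snoc by metis
  qed
qed

lemma rch_end: assumes "rch S R a b" shows "b = a \<or> b \<in> S"
proof -
  have "(\<lambda>u v. R u v \<and> u \<in> S \<and> v \<in> S)\<^sup>*\<^sup>* a b" using assms(1) by (simp add: rch_def)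
  then show ?thesis by (induction rule: rtranclp_induct) auto
qed

lemma rch_start: assumes "rch S R a b" shows "a = b \<or> a \<in> S"
proof -
  have "(\<lambda>u v. R u v \<and> u \<in> S \<and> v \<in> S)\<^sup>*\<^sup>* a b" using assms(1) by (simp add: rch_def)
  then show ?thesis by (induction rule: rtranclp_induct) auto
qed

lemma rch_first: assumes "rch S R a b" "a \<noteq> b"
  shows "\<exists>w. R a w \<and> a \<in> S \<and> w \<in> S \<and> w \<noteq> a \<and> rch (S - {a}) R w b"
proof -
  have "(\<lambda>u v. R u v \<and> u \<in> S \<and> v \<in> S)\<^sup>*\<^sup>* a b" using assms(1) by (simp add: rch_def)
  then have "a = b \<or> (\<exists>w. R a w \<and> a \<in> S \<and> w \<in> S \<and> w \<noteq> a \<and> rch (S - {a}) R w b)"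
  proof (induction rule: rtranclp_induct)
    case base then show ?case by simp
  next
    case (step b c)
    show ?case
    proof (cases "c = a")
      case True then show ?thesis by simp
    next
      case False
      from step.IH show ?thesis
      proof
        assume "a = b" then show ?thesis using step.hyps(2) False by auto
      next
        assume "\<exists>w. R a w \<and> a \<in> S \<and> w \<in> S \<and> w \<noteq> a \<and> rch (S - {a}) R w b"
        then obtain w where w: "R a w" "a \<in> S" "w \<in> S" "w \<noteq> a" "rch (S - {a}) R w b" by blast
        show ?thesis
        proof (cases "b = a")
          case True then show ?thesis using step.hyps(2) False by auto
        next
          case False2: False
          have "b \<in> S - {a}" using rch_end[OF w(5)] w(3) w(4) step.hyps(2) False2 by auto
          then have "rch (S - {a}) R w c" using rch_snoc[OF w(5)] step.hyps(2) False by auto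
          then show ?thesis using w by blast
        qed
      qed
    qed
  qed
  then show ?thesis using assms(2) by blast
qed

lemma rch_L3: assumes "rch S R a c" "a \<noteq> b" "b \<in> S"
  shows "rch (S - {b}) R a c \<or> rch (S - {a}) R b c"
proof -
  have "(\<lambda>u v. R u v \<and> u \<in> S \<and> v \<in> S)\<^sup>*\<^sup>* a c" using assms(1) by (simp add: rch_def)
  then show ?thesis
  proof (induction rule: rtranclp_induct)
    case base then show ?case by simp
  next
    case (step v v')
    from step.IH show ?case
    proof
      assume h: "rch (S - {b}) R a v"
      show ?thesis
      proof (cases "v' = b")
        case True then show ?thesis by simp
      next
        case False
        have "v \<in> S - {b}" using rch_end[OF h] assms step.hyps(2) by auto
        then show ?thesis using rch_snoc[OF h] step.hyps(2) False by auto
      qed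
    next
      assume h: "rch (S - {a}) R b v"
      show ?thesis
      proof (cases "v' = a")
        case True then show ?thesis by simp
      next
        case False
        have "v \<in> S - {a}" using rch_end[OF h] assms step.hyps(2) by auto
        then show ?thesis using rch_snoc[OF h] step.hyps(2) False by auto
      qed
    qed
  qed
qed

lemma rch_path:
  assumes "finite S" "rch S R a b"
  shows "\<exists>ps. ps \<noteq> [] \<and> hd ps = a \<and> last ps = b \<and> distinct ps \<and> set ps \<subseteq> insert a S
           \<and> (\<forall>i. Suc i < length ps \<longrightarrow> R (ps ! i) (ps ! Suc i))"
  using assms
proof (induction "card S" arbitrary: S a rule: less_induct)
  case less
  show ?case
  proof (cases "a = b")
    case True then show ?thesis by (intro exI[of _ "[a]"]) auto
  next
    case False
    obtain w where w: "R a w" "a \<in> S" "w \<in> S" "w \<noteq> a" "rch (S - {a}) R w b"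
      using rch_first[OF less.prems(2) False] by blast
    have "card (S - {a}) < card S" using card_Diff1_less[OF less.prems(1) w(2)] .
    then obtain ps where ps: "ps \<noteq> []" "hd ps = w" "last ps = b" "distinct ps" "set ps \<subseteq> insert w (S - {a})"
      "\<forall>i. Suc i < length ps \<longrightarrow> R (ps ! i) (ps ! Suc i)"
      using less.hyps[of "S - {a}" w] less.prems(1) w(5) by auto
    have "a \<notin> set ps" using ps(5) w(4) by auto
    show ?thesis
    proof (intro exI[of _ "a # ps"] conjI allI impI)
      show "last (a # ps) = b" using ps by simp
      show "distinct (a # ps)" using ps \<open>a \<notin> set ps\<close> by simp
      show "set (a # ps) \<subseteq> insert a S" using ps(5) w(3) by auto
      fix i assume i: "Suc i < length (a # ps)"
      show "R ((a # ps) ! i) ((a # ps) ! Suc i)"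
      proof (cases i)
        case 0 then show ?thesis using ps(1,2) w(1) by (simp add: hd_conv_nth)
      next
        case (Suc j) then show ?thesis using ps(6) i by simp
      qed
    qed simp_all
  qed
qed



definition delP :: "('a \<Rightarrow> 'a \<Rightarrow> bool) \<Rightarrow> 'a set \<Rightarrow> 'a \<Rightarrow> 'a \<Rightarrow> bool" where
  "delP R P u v \<longleftrightarrow> R u v \<and> {u, v} \<noteq> P"

locale sg =
  fixes V :: "'a set" and E :: "'a \<Rightarrow> 'a \<Rightarrow> bool"
  assumes sg: "simple_graph V E"
begin

lemma finV: "finite V" using sg by (simp add: simple_graph_def)
lemma inV1: "E x y \<Longrightarrow> x \<in> V" using sg by (simp add: simple_graph_def)
lemma inV2: "E x y \<Longrightarrow> y \<in> V" using sg by (simp add: simple_graph_def)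
lemma symE: "E x y \<Longrightarrow> E y x" using sg by (simp add: simple_graph_def)
lemma irr: "\<not> E x x" using sg by (simp add: simple_graph_def)
lemma neqE: "E x y \<Longrightarrow> x \<noteq> y" using irr by auto

definition cnt :: "'a \<Rightarrow> 'a \<Rightarrow> 'a \<Rightarrow> 'a \<Rightarrow> bool" where
  "cnt \<rho> y x z \<longleftrightarrow> E y x \<and> E y z \<and> x \<noteq> z \<and> E x z \<and> rch (V - {y}) E z \<rho>
      \<and> \<not> rch (V - {y}) (delP E {x, z}) z \<rho>"

lemma FS:
  assumes c: "cnt \<rho> y x z"
  shows "rch (V - {y} - {z}) E x \<rho>"
    and "\<And>w. E z w \<Longrightarrow> w \<noteq> y \<Longrightarrow> w \<noteq> x \<Longrightarrow> \<not> rch (V - {y} - {z}) E w \<rho>"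
proof -
  have c1: "rch (V - {y}) E z \<rho>" and c2: "\<not> rch (V - {y}) (delP E {x, z}) z \<rho>"
    and exz: "E x z" and eyx: "E y x" and eyz: "E y z" and xz: "x \<noteq> z"
    using c by (auto simp: cnt_def)
  have key: "\<not> rch (V - {y} - {z}) E w \<rho>" if w: "E z w" "w \<noteq> y" "w \<noteq> x" for w
  proof
    assume r: "rch (V - {y} - {z}) E w \<rho>"
    have "rch (V - {y}) (delP E {x, z}) w \<rho>"
      by (rule rch_mono[OF r]) (auto simp: delP_def doubleton_eq_iff)
    moreover have "delP E {x, z} z w" using w xz neqE[OF w(1)]
      by (auto simp: delP_def doubleton_eq_iff)
    moreover have "z \<in> V - {y}" using eyz inV2 neqE by auto
    moreover have "w \<in> V - {y}" using w inV2 by auto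
    ultimately have "rch (V - {y}) (delP E {x, z}) z \<rho>" using rch_step by metis
    then show False using c2 by simp
  qed
  then show "\<And>w. E z w \<Longrightarrow> w \<noteq> y \<Longrightarrow> w \<noteq> x \<Longrightarrow> \<not> rch (V - {y} - {z}) E w \<rho>" by blast
  have "z \<noteq> \<rho>" using c2 by auto
  then obtain w where w: "E z w" "w \<in> V - {y}" "rch (V - {y} - {z}) E w \<rho>"
    using rch_first[OF c1] by blast
  have "w = x" using key[of w] w by auto
  then show "rch (V - {y} - {z}) E x \<rho>" using w by simp
qed

lemma L_uniq: "cnt \<rho> y x z \<Longrightarrow> cnt \<rho> y x' z \<Longrightarrow> x = x'"
proof (rule ccontr)
  assume c: "cnt \<rho> y x z" and c': "cnt \<rho> y x' z" and ne: "x \<noteq> x'"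
  have "E z x'" "x' \<noteq> y" using c' symE neqE by (auto simp: cnt_def)
  then have "\<not> rch (V - {y} - {z}) E x' \<rho>" using FS(2)[OF c] ne by auto
  then show False using FS(1)[OF c'] by simp
qed

lemma L_far_uniq:
  assumes "E z p" "E z p'" "p \<noteq> p'" "rch V E p \<rho>"
    and "\<not> rch (V - {p}) E z \<rho>" "\<not> rch (V - {p'}) E z \<rho>"
  shows False
proof -
  have "p' \<in> V" using assms inV2 by auto
  from rch_L3[OF assms(4) assms(3) this]
  show False
  proof
    assume h: "rch (V - {p'}) E p \<rho>"
    have "z \<noteq> p'" "z \<in> V" "p \<in> V" using assms neqE inV1 inV2 by auto
    then have "rch (V - {p'}) E z \<rho>" using rch_step[OF assms(1) _ _ h] assms(3) by auto
    then show False using assms(6) by simp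
  next
    assume h: "rch (V - {p}) E p' \<rho>"
    have "z \<noteq> p" "z \<in> V" "p' \<in> V" using assms neqE inV1 inV2 by auto
    then have "rch (V - {p}) E z \<rho>" using rch_step[OF assms(2) _ _ h] assms(3) by auto
    then show False using assms(5) by simp
  qed
qed

lemma L_PY:
  assumes c: "cnt \<rho> y x z" and ezp: "E z p" and far: "\<not> rch (V - {p}) E z \<rho>"
  shows "x = p"
proof (rule ccontr)
  assume xp: "x \<noteq> p"
  have py: "p \<noteq> y" using c far by (auto simp: cnt_def)
  have pz: "p \<noteq> z" using neqE[OF ezp] by simp
  have pS: "p \<in> V - {y} - {z}" using py pz inV2[OF ezp] by auto
  from rch_L3[OF FS(1)[OF c] xp pS]
  show False
  proof
    assume h: "rch (V - {y} - {z} - {p}) E x \<rho>"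
    have h2: "rch (V - {p}) E x \<rho>" by (rule rch_mono[OF h]) auto
    have "E z x" "z \<in> V - {p}" "x \<in> V - {p}" using c xp pz symE inV1 inV2
      by (auto simp: cnt_def)
    then have "rch (V - {p}) E z \<rho>" using rch_step h2 by metis
    then show False using far by simp
  next
    assume h: "rch (V - {y} - {z} - {x}) E p \<rho>"
    have "rch (V - {y} - {z}) E p \<rho>" by (rule rch_mono[OF h]) auto
    then show False using FS(2)[OF c ezp py] xp by simp
  qed
qed

lemma L_YY:
  assumes c: "cnt \<rho> y x z" and c': "cnt \<rho> y' x' z" and yy: "y \<noteq> y'"
  shows "y' = x \<or> y = x'"
proof (rule ccontr)
  assume "\<not> (y' = x \<or> y = x')"
  then have n1: "y' \<noteq> x" and n2: "y \<noteq> x'" by auto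
  have ezy': "E z y'" using c' symE by (auto simp: cnt_def)
  have nr: "\<not> rch (V - {y} - {z}) E y' \<rho>" using FS(2)[OF c ezy'] yy n1 by auto
  have y'S: "y' \<in> V - {y} - {z}" using ezy' yy neqE inV2 by auto
  from rch_L3[OF FS(1)[OF c] _ y'S] n1
  have "rch (V - {y} - {z} - {y'}) E x \<rho> \<or> rch (V - {y} - {z} - {x}) E y' \<rho>" by auto
  moreover have "\<not> rch (V - {y} - {z} - {x}) E y' \<rho>"
  proof
    assume h: "rch (V - {y} - {z} - {x}) E y' \<rho>"
    have "rch (V - {y} - {z}) E y' \<rho>" by (rule rch_mono[OF h]) auto
    then show False using nr by simp
  qed
  ultimately have h: "rch (V - {y} - {z} - {y'}) E x \<rho>" by blast
  have xz: "x \<noteq> z" and eyx: "E y x" and eyz: "E y z" using c by (auto simp: cnt_def)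
  have x'z: "x' \<noteq> z" using c' by (auto simp: cnt_def)
  have h2: "rch (V - {y'}) (delP E {x', z}) x \<rho>"
    by (rule rch_mono[OF h]) (auto simp: delP_def doubleton_eq_iff)
  have yz: "y \<noteq> z" using neqE[OF eyz] .
  have e1: "delP E {x', z} y x" using eyx xz yz by (auto simp: delP_def doubleton_eq_iff)
  have e2: "delP E {x', z} z y" using eyz symE n2 yz by (auto simp: delP_def doubleton_eq_iff)
  have "x \<in> V - {y'}" "y \<in> V - {y'}" "z \<in> V - {y'}"
    using n1 yy eyx eyz inV1 inV2 neqE[OF ezy'] by auto
  then have "rch (V - {y'}) (delP E {x', z}) z \<rho>"
    using rch_step[OF e2 _ _ rch_step[OF e1 _ _ h2]] by auto
  then show False using c' by (simp add: cnt_def)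
qed

lemma L_tri:
  assumes c: "cnt \<rho> y x z" and "E z w" "E w x" "w \<noteq> y" "w \<noteq> x"
  shows False
proof -
  have nr: "\<not> rch (V - {y} - {z}) E w \<rho>" using FS(2)[OF c] assms by auto
  have "x \<in> V - {y} - {z}" "w \<in> V - {y} - {z}"
    using c assms inV1 inV2 neqE irr by (auto simp: cnt_def)
  then have "rch (V - {y} - {z}) E w \<rho>" using rch_step[OF assms(3) _ _ FS(1)[OF c]] by auto
  then show False using nr by simp
qed

lemma L_3:
  assumes c1: "cnt \<rho> y1 x1 z" and c2: "cnt \<rho> y2 x2 z" and c3: "cnt \<rho> y3 x3 z"
    and d: "y1 \<noteq> y2" "y1 \<noteq> y3" "y2 \<noteq> y3"
  shows False
proof -
  have a12: "y2 = x1 \<or> y1 = x2" using L_YY[OF c1 c2 d(1)] .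
  have a13: "y3 = x1 \<or> y1 = x3" using L_YY[OF c1 c3 d(2)] .
  have a23: "y3 = x2 \<or> y2 = x3" using L_YY[OF c2 c3 d(3)] .
  have ez: "E z y1" "E z y2" "E z y3" using c1 c2 c3 symE by (auto simp: cnt_def)
  show False
  proof (cases "y2 = x1")
    case True
    then have "y1 = x3" using a13 d by auto
    then have "y3 = x2" using a23 d by auto
    have "E y3 y2" using c2 \<open>y3 = x2\<close> symE by (auto simp: cnt_def)
    then show False using L_tri[OF c1 ez(3)] True d by auto
  next
    case False
    then have "y1 = x2" using a12 by auto
    then have "y2 = x3" using a23 d by auto
    then have "y3 = x1" using a13 d \<open>y1 = x2\<close> by auto
    have "E y2 y3" using c3 \<open>y2 = x3\<close> symE by (auto simp: cnt_def)
    then show False using L_tri[OF c1 ez(2)] \<open>y3 = x1\<close> d by auto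
  qed
qed

end


context sg begin

lemma K1cyc:
  assumes xz: "x \<noteq> z" and exy: "E x y" and eyz: "E y z"
    and r: "rch (V - {y}) (delP E {x, z}) x z"
  shows "\<exists>vs. is_cycle V E vs \<and> length vs \<ge> 4 \<and> path_in_cycle z y x vs"
proof -
  have fin: "finite (V - {y})" using finV by simp
  obtain ps where ps: "ps \<noteq> []" "hd ps = x" "last ps = z" "distinct ps"
    "set ps \<subseteq> insert x (V - {y})"
    "\<forall>i. Suc i < length ps \<longrightarrow> delP E {x, z} (ps ! i) (ps ! Suc i)"
    using rch_path[OF fin r] by blast
  have xV: "x \<in> V" "x \<noteq> y" using exy inV1 neqE by auto
  have yV: "y \<in> V" using exy inV2 by auto
  have setps: "set ps \<subseteq> V - {y}" using ps(5) xV by auto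
  define m where "m = length ps"
  have p0: "ps ! 0 = x" using ps(1,2) by (simp add: hd_conv_nth)
  have plast: "ps ! (m - 1) = z" using ps(1,3) by (simp add: last_conv_nth m_def)
  have m2: "m \<ge> 2"
  proof (rule ccontr)
    assume "\<not> m \<ge> 2"
    moreover have "m \<noteq> 0" using ps(1) m_def by simp
    ultimately have "m = 1" by simp
    then show False using p0 plast xz by simp
  qed
  have m3: "m \<ge> 3"
  proof (rule ccontr)
    assume "\<not> m \<ge> 3"
    then have "m = 2" using m2 by simp
    then have "delP E {x, z} (ps ! 0) (ps ! 1)" using ps(6) m_def by auto
    moreover have "ps ! 1 = z" using plast \<open>m = 2\<close> by simp
    ultimately show False using p0 by (simp add: delP_def)
  qed
  define vs where "vs = y # ps"
  have lvs: "length vs = m + 1" by (simp add: vs_def m_def)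
  have yn: "y \<notin> set ps" using setps by auto
  have cyc: "is_cycle V E vs"
    unfolding is_cycle_def
  proof (intro conjI allI impI)
    show "3 \<le> length vs" using lvs m3 by simp
    show "distinct vs" using ps(4) yn by (simp add: vs_def)
    show "set vs \<subseteq> V" using setps yV by (auto simp: vs_def)
    fix i assume i: "i < length vs"
    show "E (vs ! i) (vs ! ((i + 1) mod length vs))"
    proof (cases "i = m")
      case True
      then have "(i + 1) mod length vs = 0" using lvs by simp
      moreover have "vs ! i = z" using True plast m2 by (simp add: vs_def nth_Cons')
      ultimately show ?thesis using eyz symE by (simp add: vs_def)
    next
      case False
      then have im: "i < m" using i lvs by simp
      then have md: "(i + 1) mod length vs = i + 1" using lvs by simp
      show ?thesis
      proof (cases i)
        case 0
        then show ?thesis using md p0 exy symE by (simp add: vs_def)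
      next
        case (Suc j)
        have "delP E {x, z} (ps ! j) (ps ! Suc j)" using ps(6) im Suc m_def by auto
        then show ?thesis using md Suc by (simp add: vs_def delP_def)
      qed
    qed
  qed
  have pic: "path_in_cycle z y x vs"
    unfolding path_in_cycle_def
  proof (intro exI[of _ m] conjI)
    show "m < length vs" using lvs by simp
    show "vs ! m = z" using plast m2 by (simp add: vs_def nth_Cons')
    show "vs ! ((m + 1) mod length vs) = y" using lvs by (simp add: vs_def)
    have "(m + 2) mod length vs = (1 + length vs) mod length vs" using lvs by simp
    also have "\<dots> = 1" using lvs m2 by (simp add: mod_Suc)
    finally have "(m + 2) mod length vs = 1" .
    then show "vs ! ((m + 2) mod length vs) = x" using p0 by (simp add: vs_def)
  qed
  show ?thesis using cyc pic lvs m3 by auto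
qed

lemma bad_unpack:
  assumes "(y, P) \<in> bad_paths V E"
  shows "\<exists>x z. P = {x, z} \<and> x \<noteq> z \<and> E y x \<and> E y z \<and> \<not> rch (V - {y}) (delP E {x, z}) x z"
proof -
  obtain x z where h: "P = {x, z}" "x \<noteq> z" "E x y" "E y z"
    "\<not> (\<exists>vs. is_cycle V E vs \<and> length vs \<ge> 4 \<and> (path_in_cycle x y z vs \<or> path_in_cycle z y x vs))"
    using assms unfolding bad_paths_def by blast
  have "\<not> rch (V - {y}) (delP E {x, z}) x z" using K1cyc[OF h(2) h(3) h(4)] h(5) by blast
  then show ?thesis using h symE by blast
qed

end


context sg begin

lemma rch_V: "rch V E a b \<longleftrightarrow> E\<^sup>*\<^sup>* a b"
proof -
  have "(\<lambda>u v. E u v \<and> u \<in> V \<and> v \<in> V) = E" using inV1 inV2 by (auto intro!: ext)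
  then show ?thesis by (simp add: rch_def)
qed

definition NC :: "'a \<Rightarrow> bool" where
  "NC r \<longleftrightarrow> (\<forall>w. \<not> E r w) \<or> (\<exists>u\<in>V. u \<noteq> r \<and> (\<forall>w. E r w \<longrightarrow> rch (V - {r}) E w u))"

lemma ex_root: assumes vV: "v \<in> V" shows "\<exists>r. rch V E v r \<and> NC r"
proof -
  define C where "C = {w. rch V E v w}"
  have CV: "C \<subseteq> V"
  proof
    fix w assume "w \<in> C"
    then have "rch V E v w" by (simp add: C_def)
    from rch_end[OF this] vV show "w \<in> V" by auto
  qed
  have finC: "finite C" using CV finV finite_subset by auto
  have vC: "v \<in> C" by (simp add: C_def)
  define dist where "dist w = (LEAST k. (E ^^ k) v w)" for w
  have exk: "\<exists>k. (E ^^ k) v w" if "w \<in> C" for w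
    using that rtranclp_imp_relpowp by (auto simp: C_def rch_V)
  have dI: "(E ^^ dist w) v w" if "w \<in> C" for w
    using LeastI_ex[OF exk[OF that]] by (simp add: dist_def)
  have dle: "dist w \<le> k" if "(E ^^ k) v w" for w k
    using Least_le[of "\<lambda>k. (E ^^ k) v w", OF that] by (simp add: dist_def)
  define M where "M = Max (dist ` C)"
  have "M \<in> dist ` C" unfolding M_def using finC vC by (intro Max_in) auto
  then obtain r where rC: "r \<in> C" and rM: "dist r = M" by auto
  have maxr: "dist w \<le> dist r" if "w \<in> C" for w
    using that finC rM by (simp add: M_def)
  have nbC: "w \<in> C" if "E r w" for w
    using rC that rch_snoc[of V E v r w] inV1[OF that] inV2[OF that] by (auto simp: C_def)
  have "NC r"
  proof (cases "r = v")
    case True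
    have "\<not> E r w" for w
    proof
      assume e: "E r w"
      have "dist w \<le> dist v" using maxr[OF nbC[OF e]] True by simp
      moreover have "dist v = 0" using dle[of 0 v] by simp
      ultimately have "(E ^^ 0) v w" using dI[OF nbC[OF e]] by simp
      then have "w = v" by simp
      then show False using e True irr by simp
    qed
    then show ?thesis by (simp add: NC_def)
  next
    case False
    have main: "\<forall>w. w \<in> C \<longrightarrow> dist w = n \<longrightarrow> w \<noteq> r \<longrightarrow> rch (V - {r}) E w v" for n
    proof (induction n rule: less_induct)
      case (less n)
      show ?case
      proof (intro allI impI)
        fix w assume w: "w \<in> C" "dist w = n" "w \<noteq> r"
        show "rch (V - {r}) E w v"
        proof (cases n)
          case 0
          then have "(E ^^ 0) v w" using dI[OF w(1)] w(2) by simp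
          then show ?thesis by simp
        next
          case (Suc k)
          then have "(E ^^ Suc k) v w" using dI[OF w(1)] w(2) by simp
          then obtain w' where w': "(E ^^ k) v w'" "E w' w" by (rule relpowp_Suc_E)
          have w'C: "w' \<in> C" using w' relpowp_imp_rtranclp by (auto simp: C_def rch_V)
          have dw': "dist w' < n" using dle[OF w'(1)] Suc by simp
          have "w' \<noteq> r" using dw' maxr[OF w(1)] w(2) by auto
          then have ih: "rch (V - {r}) E w' v" using less.IH[OF dw'] w'C by auto
          have "w \<in> V - {r}" "w' \<in> V - {r}" using w CV \<open>w' \<noteq> r\<close> w'C by auto
          then show ?thesis using rch_step[OF symE[OF w'(2)] _ _ ih] by auto
        qed
      qed
    qed
    have "rch (V - {r}) E w v" if "E r w" for w
      using main nbC[OF that] neqE[OF that] by auto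
    then show ?thesis using False vV unfolding NC_def by (intro disjI2 bexI[of _ v]) auto
  qed
  then show ?thesis using rC by (auto simp: C_def)
qed

definition root :: "'a \<Rightarrow> 'a" where
  "root v = (SOME r. rch V E v r \<and> NC r)"

lemma root_props: assumes "v \<in> V" shows "rch V E v (root v)" "NC (root v)" "root v \<in> V"
proof -
  have "rch V E v (root v) \<and> NC (root v)"
    unfolding root_def using someI_ex[OF ex_root[OF assms]] .
  then show "rch V E v (root v)" "NC (root v)" by auto
  then show "root v \<in> V" using rch_end[of V E v "root v"] assms by auto
qed

lemma root_edge: assumes "E v w" shows "root v = root w"
proof -
  have "rch V E v r \<longleftrightarrow> rch V E w r" for r
  proof
    assume "rch V E v r"
    then show "rch V E w r" using rch_step[of E w v V r] symE[OF assms] assms inV1 inV2 by metis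
  next
    assume "rch V E w r"
    then show "rch V E v r" using rch_step[of E v w V r] assms inV1 inV2 by metis
  qed
  then have "(\<lambda>r. rch V E v r \<and> NC r) = (\<lambda>r. rch V E w r \<and> NC r)" by auto
  then show ?thesis by (simp add: root_def)
qed

end


context sg begin

definition far :: "'a \<Rightarrow> 'a \<Rightarrow> bool" where
  "far y e \<longleftrightarrow> \<not> rch (V - {y}) E e (root y)"

definition tgt :: "'a \<times> 'a set \<Rightarrow> 'a" where
  "tgt q = (let y = fst q; P = snd q in
     if root y = y then y
     else if (\<exists>e\<in>P. far y e) then (SOME e. e \<in> P \<and> far y e)
     else (SOME e. e \<in> P \<and> \<not> rch (V - {y}) (delP E P) e (root y)))"

lemma delP_sym: "delP E P u v \<Longrightarrow> delP E P v u"
  using symE by (auto simp: delP_def insert_commute)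

lemma near_ex:
  assumes b: "(y, P) \<in> bad_paths V E" and ne: "\<forall>e\<in>P. rch (V - {y}) E e \<rho>"
  shows "\<exists>e. e \<in> P \<and> \<not> rch (V - {y}) (delP E P) e \<rho>"
proof (rule ccontr)
  assume "\<not> ?thesis"
  then have all: "\<forall>e\<in>P. rch (V - {y}) (delP E P) e \<rho>" by blast
  obtain x z where h: "P = {x, z}" "x \<noteq> z" "E y x" "E y z"
    "\<not> rch (V - {y}) (delP E {x, z}) x z" using bad_unpack[OF b] by blast
  have h1: "rch (V - {y}) (delP E P) x \<rho>" and h2: "rch (V - {y}) (delP E P) z \<rho>" using all h(1) by auto
  have h3: "rch (V - {y}) (delP E P) \<rho> z" by (rule rch_sym[OF _ h2]) (rule delP_sym)
  have "rch (V - {y}) (delP E P) x z" using rch_trans[OF h1 h3] .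
  then show False using h by simp
qed

lemma tgt_root: "root y = y \<Longrightarrow> tgt (y, P) = y"
  by (simp add: tgt_def)

lemma tgt_nonroot:
  assumes b: "(y, P) \<in> bad_paths V E" and r: "root y \<noteq> y"
  shows "tgt (y, P) \<in> P \<and> (far y (tgt (y, P)) \<or>
     ((\<forall>e\<in>P. \<not> far y e) \<and> \<not> rch (V - {y}) (delP E P) (tgt (y, P)) (root y)))"
proof (cases "\<exists>e\<in>P. far y e")
  case True
  then have "tgt (y, P) = (SOME e. e \<in> P \<and> far y e)" using r by (simp add: tgt_def)
  moreover have "\<exists>e. e \<in> P \<and> far y e" using True by blast
  ultimately have "tgt (y, P) \<in> P \<and> far y (tgt (y, P))" using someI_ex[of "\<lambda>e. e \<in> P \<and> far y e"] by simp
  then show ?thesis by blast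
next
  case False
  then have t: "tgt (y, P) = (SOME e. e \<in> P \<and> \<not> rch (V - {y}) (delP E P) e (root y))"
    using r by (simp add: tgt_def)
  have "\<forall>e\<in>P. rch (V - {y}) E e (root y)" using False by (simp add: far_def)
  from near_ex[OF b this] have "tgt (y, P) \<in> P \<and> \<not> rch (V - {y}) (delP E P) (tgt (y, P)) (root y)"
    unfolding t by (rule someI_ex)
  then show ?thesis using False by blast
qed

lemma bad_nb: "(y, P) \<in> bad_paths V E \<Longrightarrow> e \<in> P \<Longrightarrow> E y e"
  using bad_unpack by blast

lemma tgt_V: assumes "q \<in> bad_paths V E" shows "tgt q \<in> V"
proof -
  obtain y P where q: "q = (y, P)" by (cases q)
  obtain x z where h: "P = {x, z}" "E y x" using bad_unpack assms q by blast
  show ?thesis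
  proof (cases "root y = y")
    case True then show ?thesis using tgt_root q h inV1 by auto
  next
    case False
    then have "tgt q \<in> P" using tgt_nonroot assms q by auto
    then show ?thesis using bad_nb assms q inV2 by blast
  qed
qed

lemma finBP: "finite (bad_paths V E)"
proof -
  have "bad_paths V E \<subseteq> V \<times> Pow V"
  proof
    fix q assume q: "q \<in> bad_paths V E"
    obtain y P where qq: "q = (y, P)" by (cases q)
    obtain x z where h: "P = {x, z}" "E y x" "E y z" using bad_unpack q qq by blast
    show "q \<in> V \<times> Pow V" using qq h inV1 inV2 by auto
  qed
  then show ?thesis using finite_subset finV by blast
qed

lemma deg_fin: "finite {w \<in> V. E y w}" using finV by simp

lemma classify:
  assumes b: "(y, P) \<in> bad_paths V E" and t: "tgt (y, P) = z" and rz: "root z \<noteq> z"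
  shows "E y z \<and> root y = root z \<and> (far y z \<or> (\<exists>x. cnt (root z) y x z \<and> P = {x, z}))"
proof -
  have ry: "root y \<noteq> y" using tgt_root t rz by force
  have tp: "tgt (y, P) \<in> P \<and> (far y (tgt (y, P)) \<or>
     ((\<forall>e\<in>P. \<not> far y e) \<and> \<not> rch (V - {y}) (delP E P) (tgt (y, P)) (root y)))"
    using tgt_nonroot[OF b ry] .
  have eyz: "E y z" using tp t bad_nb[OF b] by auto
  have rr: "root y = root z" using root_edge[OF eyz] .
  show ?thesis
  proof (cases "far y z")
    case True then show ?thesis using eyz rr by simp
  next
    case False
    then have nf: "(\<forall>e\<in>P. \<not> far y e)" and nr: "\<not> rch (V - {y}) (delP E P) z (root y)"
      using tp t by auto
    obtain a c where h: "P = {a, c}" "a \<noteq> c" "E y a" "E y c" using bad_unpack[OF b] by blast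
    have zP: "z \<in> P" using tp t by simp
    have "\<exists>x. P = {x, z} \<and> x \<noteq> z \<and> E y x"
    proof (cases "z = c")
      case True then show ?thesis using h by blast
    next
      case False
      then have "z = a" using zP h(1) by blast
      then show ?thesis using h by (intro exI[of _ c]) (auto simp: insert_commute)
    qed
    then obtain x where x: "P = {x, z}" "x \<noteq> z" "E y x" by blast
    have near: "rch (V - {y}) E z (root y)" using nf zP by (simp add: far_def)
    have exz: "E x z"
    proof (rule ccontr)
      assume ne: "\<not> E x z"
      have "rch (V - {y}) (delP E P) z (root y)"
      proof (rule rch_mono[OF near])
        fix u v assume uv: "u \<in> V - {y}" "v \<in> V - {y}" "E u v"
        have "{u, v} \<noteq> {x, z}"
        proof
          assume "{u, v} = {x, z}"
          then have "(u = x \<and> v = z) \<or> (u = z \<and> v = x)" by (simp add: doubleton_eq_iff)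
          then show False using uv(3) ne symE by blast
        qed
        then show "u \<in> V - {y} \<and> v \<in> V - {y} \<and> delP E P u v" using uv x(1) by (simp add: delP_def)
      qed
      then show False using nr by simp
    qed
    have "cnt (root z) y x z" unfolding cnt_def using x eyz exz near nr rr by simp
    then show ?thesis using eyz rr x by blast
  qed
qed

end


context sg begin

lemma other:
  assumes b: "(y, P) \<in> bad_paths V E" and eP: "e \<in> P"
  shows "\<exists>x. P = {x, e} \<and> x \<noteq> e \<and> E y x \<and> E y e"
proof -
  obtain a c where h: "P = {a, c}" "a \<noteq> c" "E y a" "E y c" using bad_unpack[OF b] by blast
  show ?thesis
  proof (cases "e = c")
    case True then show ?thesis using h by blast
  next
    case False
    then have "e = a" using eP h(1) by blast
    then show ?thesis using h by (intro exI[of _ c]) (auto simp: insert_commute)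
  qed
qed

lemma mk_cnt:
  assumes b: "(y, P) \<in> bad_paths V E" and eP: "e \<in> P"
    and near: "rch (V - {y}) E e \<rho>" and nr: "\<not> rch (V - {y}) (delP E P) e \<rho>"
  shows "\<exists>x. P = {x, e} \<and> cnt \<rho> y x e"
proof -
  obtain x where x: "P = {x, e}" "x \<noteq> e" "E y x" "E y e" using other[OF b eP] by blast
  have exz: "E x e"
  proof (rule ccontr)
    assume ne: "\<not> E x e"
    have "rch (V - {y}) (delP E P) e \<rho>"
    proof (rule rch_mono[OF near])
      fix u v assume uv: "u \<in> V - {y}" "v \<in> V - {y}" "E u v"
      have "{u, v} \<noteq> {x, e}"
      proof
        assume "{u, v} = {x, e}"
        then have "(u = x \<and> v = e) \<or> (u = e \<and> v = x)" by (simp add: doubleton_eq_iff)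
        then show False using uv(3) ne symE by blast
      qed
      then show "u \<in> V - {y} \<and> v \<in> V - {y} \<and> delP E P u v" using uv x(1) by (simp add: delP_def)
    qed
    then show False using nr by simp
  qed
  have "cnt \<rho> y x e" unfolding cnt_def using x exz near nr by simp
  then show ?thesis using x by blast
qed

lemma root_case:
  assumes zV: "z \<in> V" and rz: "root z = z"
  shows "(\<Sum>q\<in>{q. q \<in> bad_paths V E \<and> tgt q = z}. 1 / real (degree V E (fst q))) \<le> 1"
proof -
  define Q where "Q = {q. q \<in> bad_paths V E \<and> tgt q = z}"
  define A where "A = {P. (z, P) \<in> bad_paths V E}"
  have fstQ: "fst q = z" if "q \<in> Q" for q
  proof -
    obtain y P where q: "q = (y, P)" by (cases q)
    have b: "(y, P) \<in> bad_paths V E" and t: "tgt (y, P) = z" using that q by (auto simp: Q_def)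
    show ?thesis
    proof (cases "root y = y")
      case True then show ?thesis using tgt_root t q by simp
    next
      case False
      have tp: "tgt (y, P) \<in> P \<and> (far y (tgt (y, P)) \<or>
         ((\<forall>e\<in>P. \<not> far y e) \<and> \<not> rch (V - {y}) (delP E P) (tgt (y, P)) (root y)))"
        using tgt_nonroot[OF b False] .
      have "E y z" using tp t bad_nb[OF b] by auto
      then have "root y = z" using root_edge rz by metis
      then show ?thesis using tp t by (simp add: far_def)
    qed
  qed
  have QA: "Q \<subseteq> (\<lambda>P. (z, P)) ` A"
  proof
    fix q assume "q \<in> Q"
    then show "q \<in> (\<lambda>P. (z, P)) ` A" using fstQ[of q] by (cases q) (auto simp: Q_def A_def)
  qed
  have finA: "finite A"
  proof -
    have "(\<lambda>P. (z, P)) ` A \<subseteq> bad_paths V E" by (auto simp: A_def)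
    then have "finite ((\<lambda>P. (z, P)) ` A)" using finBP finite_subset by blast
    then show ?thesis using finite_imageD inj_on_def by (metis (mono_tags, lifting) Pair_inject)
  qed
  have cardQ: "card Q \<le> card A"
    using card_mono[OF finite_imageI[OF finA] QA] card_image_le[OF finA, of "Pair z"] by linarith
  have cardA: "card A \<le> degree V E z"
  proof -
    have nc: "NC z" using root_props(2)[OF zV] rz by simp
    show ?thesis
    proof (cases "\<forall>w. \<not> E z w")
      case True
      then have "A = {}" using bad_unpack by (auto simp: A_def)
      then show ?thesis by simp
    next
      case False
      then obtain u where u: "u \<in> V" "u \<noteq> z" "\<And>w. E z w \<Longrightarrow> rch (V - {z}) E w u"
        using nc by (auto simp: NC_def)
      define g where "g P = (SOME e. e \<in> P \<and> \<not> rch (V - {z}) (delP E P) e u)" for P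
      have gP: "g P \<in> P \<and> \<not> rch (V - {z}) (delP E P) (g P) u" if "P \<in> A" for P
      proof -
        have b: "(z, P) \<in> bad_paths V E" using that by (simp add: A_def)
        have "\<forall>e\<in>P. rch (V - {z}) E e u" using u(3) bad_nb[OF b] by blast
        from near_ex[OF b this] show ?thesis unfolding g_def by (rule someI_ex)
      qed
      have gN: "g ` A \<subseteq> {w \<in> V. E z w}"
        using gP bad_nb inV2 by (fastforce simp: A_def)
      have inj: "inj_on g A"
      proof (rule inj_onI)
        fix P1 P2 assume p: "P1 \<in> A" "P2 \<in> A" "g P1 = g P2"
        have b1: "(z, P1) \<in> bad_paths V E" and b2: "(z, P2) \<in> bad_paths V E" using p by (auto simp: A_def)
        obtain x1 where x1: "P1 = {x1, g P1}" "cnt u z x1 (g P1)"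
          using mk_cnt[OF b1 _ u(3)[OF bad_nb[OF b1]]] gP[OF p(1)] by blast
        obtain x2 where x2: "P2 = {x2, g P2}" "cnt u z x2 (g P2)"
          using mk_cnt[OF b2 _ u(3)[OF bad_nb[OF b2]]] gP[OF p(2)] by blast
        have "x1 = x2" using L_uniq x1(2) x2(2) p(3) by metis
        then show "P1 = P2" using x1(1) x2(1) p(3) by simp
      qed
      have "card A \<le> card {w \<in> V. E z w}"
        using card_inj_on_le[OF inj gN deg_fin] .
      then show ?thesis by (simp add: degree_def)
    qed
  qed
  have "(\<Sum>q\<in>Q. 1 / real (degree V E (fst q))) = (\<Sum>q\<in>Q. 1 / real (degree V E z))"
    using fstQ by simp
  also have "\<dots> = real (card Q) / real (degree V E z)" by simp
  also have "\<dots> \<le> 1"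
  proof (cases "degree V E z = 0")
    case True then show ?thesis by simp
  next
    case False
    then show ?thesis using cardQ cardA by simp
  qed
  finally show ?thesis by (simp add: Q_def)
qed

end


context sg begin

lemma nonroot_case:
  assumes zV: "z \<in> V" and rz: "root z \<noteq> z"
  shows "(\<Sum>q\<in>{q. q \<in> bad_paths V E \<and> tgt q = z}. 1 / real (degree V E (fst q))) < 3 / 2"
proof -
  define \<rho> where "\<rho> = root z"
  define Q where "Q = {q. q \<in> bad_paths V E \<and> tgt q = z}"
  define d where "d y = real (degree V E y)" for y
  define c where "c y = card {q \<in> Q. fst q = y}" for y
  define Fs where "Fs = {y \<in> V. E z y \<and> far y z}"
  define Yc where "Yc = {y \<in> V. \<exists>x. cnt \<rho> y x z}"
  have finQ: "finite Q" using finBP by (simp add: Q_def)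
  have finV': "finite V" using finV .
  have fstV: "fst ` Q \<subseteq> V"
  proof
    fix y assume "y \<in> fst ` Q"
    then obtain P where "(y, P) \<in> bad_paths V E" by (auto simp: Q_def)
    then show "y \<in> V" using bad_unpack inV1 by blast
  qed
  have S1: "(\<Sum>q\<in>Q. 1 / d (fst q)) = (\<Sum>y\<in>V. c y / d y)"
  proof -
    have "(\<Sum>q\<in>Q. 1 / d (fst q)) = (\<Sum>y\<in>V. \<Sum>q\<in>{x. x \<in> Q \<and> fst x = y}. 1 / d (fst q))"
      using sum.group[OF finQ finV' fstV, of "\<lambda>q. 1 / d (fst q)"] by simp
    also have "\<dots> = (\<Sum>y\<in>V. c y / d y)"
    proof (rule sum.cong[OF refl])
      fix y assume "y \<in> V"
      have "(\<Sum>q\<in>{x. x \<in> Q \<and> fst x = y}. 1 / d (fst q)) = (\<Sum>q\<in>{x. x \<in> Q \<and> fst x = y}. 1 / d y)"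
        by (rule sum.cong) auto
      then show "(\<Sum>q\<in>{x. x \<in> Q \<and> fst x = y}. 1 / d (fst q)) = c y / d y"
        by (simp add: c_def)
    qed
    finally show ?thesis .
  qed
  have cls: "E y z \<and> root y = \<rho> \<and> (far y z \<or> (\<exists>x. cnt \<rho> y x z \<and> P = {x, z}))"
    if "(y, P) \<in> Q" for y P
    using classify[of y P z] that rz by (auto simp: Q_def \<rho>_def)
  have FsYc: "Fs \<inter> Yc = {}"
  proof -
    have False if yF: "y \<in> Fs" and yY: "y \<in> Yc" for y
    proof -
      from yY obtain x where cn: "cnt \<rho> y x z" unfolding Yc_def by blast
      have "root y = \<rho>" using that root_edge symE by (auto simp: Fs_def \<rho>_def)
      then show False using cn that by (auto simp: Fs_def far_def cnt_def)
    qed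
    then show ?thesis by blast
  qed
  have c0: "c y = 0" if "y \<in> V" "y \<notin> Fs \<union> Yc" for y
  proof -
    have "{q \<in> Q. fst q = y} = {}"
    proof (rule ccontr)
      assume "{q \<in> Q. fst q = y} \<noteq> {}"
      then obtain P where P: "(y, P) \<in> Q" by force
      from cls[OF P] have "y \<in> Fs \<union> Yc" using that symE by (auto simp: Fs_def Yc_def)
      then show False using that by simp
    qed
    then show ?thesis unfolding c_def by (simp only: card.empty)
  qed
  have cF: "c y \<le> degree V E y - 1" "degree V E y \<ge> 1" if "y \<in> Fs" for y
  proof -
    have eyz: "E y z" using that symE by (auto simp: Fs_def)
    have sub: "{q \<in> Q. fst q = y} \<subseteq> (\<lambda>w. (y, {w, z})) ` ({w \<in> V. E y w} - {z})"
    proof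
      fix q assume q: "q \<in> {q \<in> Q. fst q = y}"
      then obtain P where qP: "q = (y, P)" "(y, P) \<in> Q" by (cases q) auto
      have b: "(y, P) \<in> bad_paths V E" and t: "tgt (y, P) = z" using qP by (auto simp: Q_def)
      have ry: "root y \<noteq> y" using tgt_root t rz by force
      have "z \<in> P" using tgt_nonroot[OF b ry] t by simp
      then obtain x where "P = {x, z}" "x \<noteq> z" "E y x" using other[OF b] by blast
      then show "q \<in> (\<lambda>w. (y, {w, z})) ` ({w \<in> V. E y w} - {z})" using qP inV2 by auto
    qed
    have "c y \<le> card ({w \<in> V. E y w} - {z})"
      unfolding c_def using card_mono[OF finite_imageI sub] card_image_le deg_fin
      by (meson finite_Diff le_trans)
    also have "\<dots> = degree V E y - 1" using eyz inV2 by (simp add: degree_def deg_fin)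
    finally show "c y \<le> degree V E y - 1" .
    have "z \<in> {w \<in> V. E y w}" using eyz inV2 by auto
    then have "card {w \<in> V. E y w} \<ge> 1" using deg_fin by (metis One_nat_def card_0_eq empty_iff less_one not_le)
    then show "degree V E y \<ge> 1" by (simp add: degree_def)
  qed
  have cY: "c y \<le> 1" "degree V E y \<ge> 2" if yY: "y \<in> Yc" for y
  proof -
    from yY obtain x where cn: "cnt \<rho> y x z" unfolding Yc_def by blast
    have sub: "{q \<in> Q. fst q = y} \<subseteq> {(y, {x, z})}"
    proof
      fix q assume q: "q \<in> {q \<in> Q. fst q = y}"
      then obtain P where qP: "q = (y, P)" "(y, P) \<in> Q" by (cases q) auto
      from cls[OF qP(2)] have "far y z \<or> (\<exists>x. cnt \<rho> y x z \<and> P = {x, z})" by simp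
      moreover have "\<not> far y z" using cls[OF qP(2)] cn by (auto simp: far_def cnt_def)
      ultimately obtain x' where "cnt \<rho> y x' z" "P = {x', z}" by blast
      then show "q \<in> {(y, {x, z})}" using L_uniq[OF cn] qP by auto
    qed
    show "c y \<le> 1" unfolding c_def using card_mono[OF _ sub] by simp
    have "{x, z} \<subseteq> {w \<in> V. E y w}" using cn inV2 by (auto simp: cnt_def)
    moreover have "card {x, z} = 2" using cn by (auto simp: cnt_def)
    ultimately show "degree V E y \<ge> 2" unfolding degree_def by (metis card_mono deg_fin)
  qed
  have finFs: "finite Fs" and finYc: "finite Yc" using finV by (auto simp: Fs_def Yc_def)
  have farFs: "\<not> rch (V - {p}) E z \<rho>" "E z p" "p \<in> V" "root p = \<rho>" if "p \<in> Fs" for p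
    using that root_edge by (auto simp: Fs_def far_def \<rho>_def)
  have cardFs: "card Fs \<le> 1"
  proof -
    have "p = p'" if "p \<in> Fs" "p' \<in> Fs" for p p'
    proof (rule ccontr)
      assume ne: "p \<noteq> p'"
      have "rch V E p \<rho>" using root_props(1)[OF farFs(3)[OF that(1)]] farFs(4)[OF that(1)] by simp
      then show False using L_far_uniq[OF farFs(2)[OF that(1)] farFs(2)[OF that(2)] ne]
          farFs(1)[OF that(1)] farFs(1)[OF that(2)] by blast
    qed
    then show ?thesis using card_le_Suc0_iff_eq[OF finFs] by auto
  qed
  have cardYc: "card Yc \<le> 2"
  proof (rule ccontr)
    assume "\<not> card Yc \<le> 2"
    then have c3: "card Yc \<ge> 3" by simp
    then obtain a where a: "a \<in> Yc" by (metis card.empty empty_iff not_numeral_le_zero equals0I)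
    have "card (Yc - {a}) \<ge> 2" using c3 a finYc by simp
    then obtain b where b: "b \<in> Yc - {a}" by (metis card.empty ex_in_conv not_numeral_le_zero)
    have "card (Yc - {a} - {b}) \<ge> 1" using c3 a b finYc by (simp add: card_Diff_singleton)
    then obtain e where e: "e \<in> Yc - {a} - {b}" by (metis card.empty ex_in_conv not_one_le_zero)
    obtain xa xb xe where "cnt \<rho> a xa z" "cnt \<rho> b xb z" "cnt \<rho> e xe z"
      using a b e by (auto simp: Yc_def)
    then show False using L_3 a b e by blast
  qed
  have cardYc1: "card Yc \<le> 1" if "p \<in> Fs" for p
  proof -
    have "y = y'" if yY: "y \<in> Yc" "y' \<in> Yc" for y y'
    proof (rule ccontr)
      assume ne: "y \<noteq> y'"
      from yY obtain x x' where cn: "cnt \<rho> y x z" "cnt \<rho> y' x' z" unfolding Yc_def by blast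
      have "x = p" "x' = p" using L_PY cn farFs \<open>p \<in> Fs\<close> by blast+
      then have "y' = p \<or> y = p" using L_YY[OF cn ne] by simp
      then show False using FsYc that \<open>p \<in> Fs\<close> by auto
    qed
    then show ?thesis using card_le_Suc0_iff_eq[OF finYc] by auto
  qed
  have "(\<Sum>y\<in>V. c y / d y) = (\<Sum>y\<in>Fs \<union> Yc. c y / d y)"
    by (rule sum.mono_neutral_right[OF finV]) (auto simp: Fs_def Yc_def c0)
  also have "\<dots> = (\<Sum>y\<in>Fs. c y / d y) + (\<Sum>y\<in>Yc. c y / d y)"
    by (rule sum.union_disjoint[OF finFs finYc FsYc])
  finally have S2: "(\<Sum>y\<in>V. c y / d y) = (\<Sum>y\<in>Fs. c y / d y) + (\<Sum>y\<in>Yc. c y / d y)" .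
  have SY: "(\<Sum>y\<in>Yc. c y / d y) \<le> real (card Yc) / 2"
  proof -
    have "(\<Sum>y\<in>Yc. c y / d y) \<le> (\<Sum>y\<in>Yc. 1 / 2)"
    proof (rule sum_mono)
      fix y assume y: "y \<in> Yc"
      have "real (c y) \<le> 1" using cY(1)[OF y] by simp
      moreover have "d y \<ge> 2" using cY(2)[OF y] by (simp add: d_def)
      ultimately show "c y / d y \<le> 1 / 2" by (simp add: divide_simps)
    qed
    then show ?thesis by simp
  qed
  show ?thesis
  proof (cases "Fs = {}")
    case True
    have "(\<Sum>q\<in>Q. 1 / d (fst q)) \<le> real (card Yc) / 2" using S1 S2 SY True by simp
    also have "\<dots> \<le> 1" using cardYc by simp
    finally show ?thesis by (simp add: Q_def d_def)
  next
    case False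
    then obtain p where p: "p \<in> Fs" by blast
    then have Fsp: "Fs = {p}" using cardFs card_le_Suc0_iff_eq[OF finFs] by auto
    have "c p / d p < 1"
    proof -
      have "real (c p) \<le> d p - 1" using cF[OF p] by (simp add: d_def)
      moreover have "d p \<ge> 1" using cF(2)[OF p] by (simp add: d_def)
      ultimately show ?thesis by (simp add: divide_simps)
    qed
    then have "(\<Sum>q\<in>Q. 1 / d (fst q)) < 1 + real (card Yc) / 2" using S1 S2 SY Fsp by simp
    also have "\<dots> \<le> 3 / 2" using cardYc1[OF p] by simp
    finally show ?thesis by (simp add: Q_def d_def)
  qed
qed

theorem main:
  assumes "V \<noteq> {}"
  shows "(\<Sum>p\<in>bad_paths V E. 1 / real (degree V E (fst p))) < 3 * real (card V) / 2"
proof -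
  have tV: "tgt ` bad_paths V E \<subseteq> V" using tgt_V by blast
  have "(\<Sum>p\<in>bad_paths V E. 1 / real (degree V E (fst p)))
      = (\<Sum>z\<in>V. \<Sum>q\<in>{q. q \<in> bad_paths V E \<and> tgt q = z}. 1 / real (degree V E (fst q)))"
    by (rule sum.group[OF finBP finV tV, of "\<lambda>p. 1 / real (degree V E (fst p))", symmetric])
  also have "\<dots> < (\<Sum>z\<in>V. 3 / 2)"
  proof (rule sum_strict_mono[OF finV assms])
    fix z assume z: "z \<in> V"
    show "(\<Sum>q\<in>{q. q \<in> bad_paths V E \<and> tgt q = z}. 1 / real (degree V E (fst q))) < 3 / 2"
    proof (cases "root z = z")
      case True then show ?thesis using root_case[OF z True] by simp
    next
      case False then show ?thesis using nonroot_case[OF z False] by simp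
    qed
  qed
  also have "\<dots> = 3 * real (card V) / 2" by simp
  finally show ?thesis .
qed

end

theorem proposition3p5:
  fixes V :: "'a set" and E :: "'a \<Rightarrow> 'a \<Rightarrow> bool"
  assumes "simple_graph V E" and "V \<noteq> {}"
  shows "(\<Sum>p\<in>bad_paths V E. 1 / real (degree V E (fst p))) < 3 * real (card V) / 2"
proof -
  interpret sg V E using assms(1) by unfold_locales
  show ?thesis using main[OF assms(2)] .
qed


end
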